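(* Let $\tau=\{\tau_1,\dots,\tau_n\}$ with $\tau_i=(T_i,C_i,D_i)$, $0<C_i\le D_i\le T_i$, and assume $\min_{1\le i\le n}(D_i-C_i)>0$. Let $\Pi>0$, and let $m'$ be a positive integer with $$m'\ge\frac{\sum_{i=1}^nC_i}{\min_{1\le i\le n}\{D_i-C_i\}}+n.$$ Then the MPR model $R=\langle\Pi,m'\Pi,m'\rangle$ satisfies $$\mathrm{dem}_k(A_k+D_k,m')\le\mathrm{sbf}_R(A_k+D_k)\quad\text{for all }k\in\{1,\dots,n\}\text{ and all real }A_k\ge0.$$
   Context: MPR model: $R=\langle\Pi,\Theta,m'\rangle$ with $\Pi>0$, $m'$ a positive integer and $0\le\Theta\le m'\Pi$. A supply pattern of $R$ is a piecewise-constant function $s:[0,\infty)\to\{0,\dots,m'\}$ with $\int_{j\Pi}^{(j+1)\Pi}s(t)\,dt=\Theta$ for every integer $j\ge0$. Then $$\mathrm{sbf}_R(t)=\inf\Big\{\int_{t_0}^{t_0+t}s: s\text{ a supply pattern of }R,\ t_0\ge0\Big\}.$$ Demand bound: for $t\ge0$ let $$CI_i(t)=\min\Big\{C_i,\max\Big\{0,\;t-\Big\lfloor\tfrac{t+T_i-D_i}{T_i}\Big\rfloor T_i\Big\}\Big\},\qquad W_i(t)=\Big\lfloor\tfrac{t+T_i-D_i}{T_i}\Big\rfloor C_i+CI_i(t).$$ Fix $k$ and $A\ge0$, and put $t=A+D_k$. For $i\ne k$ define $$\bar I_i=\min\{W_i(t),\,t-C_k\},\qquad \hat I_i=\min\{W_i(t)-CI_i(t),\,t-C_k\},$$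 and for $i=k$ define $$\bar I_k=\min\{W_k(t)-C_k,\,A\},\qquad \hat I_k=\min\{W_k(t)-C_k-CI_k(t),\,A\}.$$ Then $$\mathrm{dem}_k(A+D_k,m')=m'C_k+\sum_{i=1}^n\hat I_i+S,$$ where $S$ is the sum of the $m'-1$ largest values among $\{\bar I_i-\hat I_i\}_{i=1}^n$ (all of them if $n\le m'-1$; $S=0$ if $m'=1$). *)

theory Defs
  imports "HOL-Analysis.Analysis"
begin

definition piecewise_constant :: "(real \<Rightarrow> real) \<Rightarrow> bool" where
  "piecewise_constant s \<longleftrightarrow>
     (\<forall>b. \<exists>Bp. finite Bp \<and>
        (\<forall>x\<in>{0..b} - Bp. \<exists>e>0. \<forall>y. 0 \<le> y \<and> \<bar>y - x\<bar> < e \<longrightarrow> s y = s x))"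

definition supply_pattern :: "real \<Rightarrow> real \<Rightarrow> nat \<Rightarrow> (real \<Rightarrow> real) \<Rightarrow> bool" where
  "supply_pattern Per Theta m' s \<longleftrightarrow>
     piecewise_constant s \<and>
     (\<forall>t\<ge>0. s t \<in> real ` {0..m'}) \<and>
     (\<forall>j::nat. s integrable_on {real j * Per .. (real j + 1) * Per} \<and>
               integral {real j * Per .. (real j + 1) * Per} s = Theta)"

definition sbf :: "real \<Rightarrow> real \<Rightarrow> nat \<Rightarrow> real \<Rightarrow> real" where
  "sbf Per Theta m' t =
     Inf {integral {t0 .. t0 + t} s | s t0. supply_pattern Per Theta m' s \<and> t0 \<ge> 0}"

definition nfloor :: "real \<Rightarrow> real \<Rightarrow> real \<Rightarrow> real" where
  "nfloor Ti Di t = of_int \<lfloor>(t + Ti - Di) / Ti\<rfloor>"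

definition CI :: "real \<Rightarrow> real \<Rightarrow> real \<Rightarrow> real \<Rightarrow> real" where
  "CI Ti Ci Di t = min Ci (max 0 (t - nfloor Ti Di t * Ti))"

definition W :: "real \<Rightarrow> real \<Rightarrow> real \<Rightarrow> real \<Rightarrow> real" where
  "W Ti Ci Di t = nfloor Ti Di t * Ci + CI Ti Ci Di t"

definition sum_largest :: "nat \<Rightarrow> real list \<Rightarrow> real" where
  "sum_largest q xs = sum_list (take q (rev (sort xs)))"

text \<open>Tasks are indexed 1..n by the functions T, C, D. dem_k(t, m') with A = t - D_k.\<close>
definition Ibar :: "(nat \<Rightarrow> real) \<Rightarrow> (nat \<Rightarrow> real) \<Rightarrow> (nat \<Rightarrow> real) \<Rightarrow> nat \<Rightarrow> real \<Rightarrow> nat \<Rightarrow> real" where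
  "Ibar T C D k t i =
     (if i = k then min (W (T k) (C k) (D k) t - C k) (t - D k)
      else min (W (T i) (C i) (D i) t) (t - C k))"

definition Ihat :: "(nat \<Rightarrow> real) \<Rightarrow> (nat \<Rightarrow> real) \<Rightarrow> (nat \<Rightarrow> real) \<Rightarrow> nat \<Rightarrow> real \<Rightarrow> nat \<Rightarrow> real" where
  "Ihat T C D k t i =
     (if i = k then min (W (T k) (C k) (D k) t - C k - CI (T k) (C k) (D k) t) (t - D k)
      else min (W (T i) (C i) (D i) t - CI (T i) (C i) (D i) t) (t - C k))"

definition dem :: "nat \<Rightarrow> (nat \<Rightarrow> real) \<Rightarrow> (nat \<Rightarrow> real) \<Rightarrow> (nat \<Rightarrow> real) \<Rightarrow> nat \<Rightarrow> real \<Rightarrow> nat \<Rightarrow> real" where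
  "dem n T C D k t m' =
     real m' * C k + (\<Sum>i=1..n. Ihat T C D k t i)
     + sum_largest (m' - 1) (map (\<lambda>i. Ibar T C D k t i - Ihat T C D k t i) [1..<n+1])"

end

theory Submission
  imports Defs "HOL-Library.Multiset"
begin

lemma sum_take_le:
  fixes xs :: "real list"
  assumes "\<forall>x\<in>set xs. 0 \<le> x"
  shows "sum_list (take q xs) \<le> sum_list xs"
proof -
  have "sum_list xs = sum_list (take q xs) + sum_list (drop q xs)"
    by (metis append_take_drop_id sum_list_append)
  moreover have "0 \<le> sum_list (drop q xs)"
    using assms by (intro sum_list_nonneg) (meson in_set_dropD)
  ultimately show ?thesis by linarith
qed

lemma sp_bound:
  assumes "supply_pattern Per Theta m' s" "x \<ge> 0"
  shows "s x \<le> real m'" "s x \<ge> 0"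
  using assms unfolding supply_pattern_def by auto

lemma sp_total:
  assumes sp: "supply_pattern Per (real m' * Per) m' s" and P: "Per > 0"
  shows "s integrable_on {0 .. real N * Per} \<and> integral {0 .. real N * Per} s = real N * (real m' * Per)"
proof (induction N)
  case 0
  then show ?case using integrable_on_refl[of s 0] by (simp add: cbox_interval)
next
  case (Suc N)
  have j: "s integrable_on {real N * Per .. (real N + 1) * Per}"
          "integral {real N * Per .. (real N + 1) * Per} s = real m' * Per"
    using sp unfolding supply_pattern_def by auto
  have le1: "0 \<le> real N * Per" using P by simp
  have le2: "real N * Per \<le> (real N + 1) * Per" using P by (simp add: distrib_right)
  have "s integrable_on {0 .. (real N + 1) * Per}"
    using Henstock_Kurzweil_Integration.integrable_combine[OF le1 le2] Suc.IH j by blast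
  moreover have "integral {0 .. (real N + 1) * Per} s = real N * (real m' * Per) + real m' * Per"
    using Henstock_Kurzweil_Integration.integral_combine[OF le1 le2 calculation] Suc.IH j by simp
  ultimately show ?case by (simp add: algebra_simps)
qed

lemma sp_lower:
  assumes sp: "supply_pattern Per (real m' * Per) m' s" and P: "Per > 0"
    and t0: "t0 \<ge> 0" and t: "t \<ge> 0"
  shows "real m' * t \<le> integral {t0 .. t0 + t} s"
proof -
  obtain N :: nat where N: "(t0 + t) / Per \<le> real N" using real_arch_simple by blast
  hence NP: "t0 + t \<le> real N * Per" using P by (simp add: field_simps)
  from sp_total[OF sp P, of N] have I: "s integrable_on {0 .. real N * Per}"
    and V: "integral {0 .. real N * Per} s = real N * (real m' * Per)" by auto
  have I1: "s integrable_on {0 .. t0 + t}"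
    by (rule integrable_subinterval_real[OF I]) (use NP in auto)
  have I0: "s integrable_on {0 .. t0}"
    by (rule integrable_subinterval_real[OF I]) (use NP t in auto)
  have I2: "s integrable_on {t0+t .. real N * Per}"
    by (rule integrable_subinterval_real[OF I]) (use NP t t0 in auto)
  have c1: "integral {0 .. t0 + t} s + integral {t0 + t .. real N * Per} s = integral {0 .. real N * Per} s"
    using Henstock_Kurzweil_Integration.integral_combine[OF _ NP I] t t0 by simp
  have c2: "integral {0 .. t0} s + integral {t0 .. t0 + t} s = integral {0 .. t0 + t} s"
    using Henstock_Kurzweil_Integration.integral_combine[OF t0 _ I1] t by simp
  have b0: "integral {0 .. t0} s \<le> integral {0 .. t0} (\<lambda>x. real m')"
    by (rule integral_le[OF I0]) (auto intro: sp_bound[OF sp])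
  have b2: "integral {t0+t .. real N * Per} s \<le> integral {t0+t .. real N * Per} (\<lambda>x. real m')"
    by (rule integral_le[OF I2]) (use t t0 in \<open>auto intro: sp_bound[OF sp]\<close>)
  have e0: "integral {0 .. t0} (\<lambda>x. real m') = t0 * real m'" using t0 by simp
  have e2: "integral {t0+t .. real N * Per} (\<lambda>x. real m') = (real N * Per - (t0 + t)) * real m'"
    using NP by simp
  show ?thesis using c1 c2 b0 b2 e0 e2 V by (simp only:) (simp add: algebra_simps)
qed

lemma sbf_ge:
  assumes P: "Per > 0" and t: "t \<ge> 0"
  shows "real m' * t \<le> sbf Per (real m' * Per) m' t"
  unfolding sbf_def
proof (rule cInf_greatest)
  have "supply_pattern Per (real m' * Per) m' (\<lambda>_. real m')"
    unfolding supply_pattern_def piecewise_constant_def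
    using P by (auto intro!: exI[of _ "{}"] simp: algebra_simps)
  then show "{integral {t0..t0 + t} s |s t0. supply_pattern Per (real m' * Per) m' s \<and> 0 \<le> t0} \<noteq> {}"
    by blast
next
  fix x assume "x \<in> {integral {t0..t0 + t} s |s t0. supply_pattern Per (real m' * Per) m' s \<and> 0 \<le> t0}"
  then show "real m' * t \<le> x" using sp_lower[OF _ P _ t] by blast
qed

theorem lemma3:
  fixes n :: nat and T C D :: "nat \<Rightarrow> real" and Per :: real and m' :: nat
  assumes tasks: "\<forall>i\<in>{1..n}. 0 < C i \<and> C i \<le> D i \<and> D i \<le> T i"
    and n_pos: "n \<ge> 1"
    and slack: "Min ((\<lambda>i. D i - C i) ` {1..n}) > 0"
    and Pi_pos: "Per > 0"
    and m_pos: "m' > 0"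
    and m_bound: "real m' \<ge> (\<Sum>i=1..n. C i) / Min ((\<lambda>i. D i - C i) ` {1..n}) + real n"
  shows "\<forall>k\<in>{1..n}. \<forall>A::real. A \<ge> 0 \<longrightarrow>
           dem n T C D k (A + D k) m' \<le> sbf Per (real m' * Per) m' (A + D k)"
proof (intro ballI allI impI)
  fix k A assume k: "k \<in> {1..n}" and A: "(A::real) \<ge> 0"
  define t where "t = A + D k"
  have Ck: "0 < C k" "C k \<le> D k" using tasks k by auto
  have tC: "t \<ge> C k" using A Ck unfolding t_def by simp
  have "(\<Sum>i=1..n. C i) \<ge> 0" using tasks by (intro sum_nonneg) (auto intro: less_imp_le)
  hence mn: "real m' \<ge> real n" using m_bound slack by (smt (verit) divide_nonneg_pos)
  have CI0: "\<And>i. i \<in> {1..n} \<Longrightarrow> CI (T i) (C i) (D i) t \<ge> 0"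
  proof -
    fix i assume "i \<in> {1..n}"
    hence "0 \<le> C i" using tasks by (meson less_imp_le)
    thus "CI (T i) (C i) (D i) t \<ge> 0" unfolding CI_def by simp
  qed
  have diff0: "\<And>i. i \<in> {1..n} \<Longrightarrow> Ibar T C D k t i - Ihat T C D k t i \<ge> 0"
  proof -
    fix i assume "i \<in> {1..n}"
    hence "CI (T i) (C i) (D i) t \<ge> 0" by (rule CI0)
    thus "Ibar T C D k t i - Ihat T C D k t i \<ge> 0" unfolding Ibar_def Ihat_def
      by (cases "i = k") (auto simp: min_def)
  qed
  have bar: "\<And>i. i \<in> {1..n} \<Longrightarrow> Ibar T C D k t i \<le> t - C k"
    using Ck unfolding Ibar_def by auto
  define xs where "xs = map (\<lambda>i. Ibar T C D k t i - Ihat T C D k t i) [1..<n+1]"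
  have xs0: "\<forall>x\<in>set xs. 0 \<le> x" using diff0 unfolding xs_def by auto
  have "sum_largest (m' - 1) xs \<le> sum_list (rev (sort xs))"
    unfolding sum_largest_def by (rule sum_take_le) (use xs0 in auto)
  also have "\<dots> = sum_list xs" by (metis mset_sort mset_rev sum_mset_sum_list)
  also have "\<dots> = (\<Sum>i=1..n. Ibar T C D k t i - Ihat T C D k t i)"
    unfolding xs_def by (simp only: sum_set_upt_conv_sum_list_nat[symmetric] set_upt) (simp add: atLeastLessThanSuc_atLeastAtMost)
  finally have S: "sum_largest (m' - 1) xs \<le> (\<Sum>i=1..n. Ibar T C D k t i - Ihat T C D k t i)" .
  have "dem n T C D k t m' \<le> real m' * C k + (\<Sum>i=1..n. Ibar T C D k t i)"
    using S unfolding dem_def xs_def[symmetric] by (simp add: sum_subtractf)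
  also have "\<dots> \<le> real m' * C k + (\<Sum>i=1..n. t - C k)"
    using bar by (intro add_left_mono sum_mono) auto
  also have "\<dots> = real m' * C k + real n * (t - C k)" by simp
  also have "\<dots> \<le> real m' * C k + real m' * (t - C k)"
    using mn tC by (intro add_left_mono mult_right_mono) auto
  also have "\<dots> = real m' * t" by (simp add: algebra_simps)
  also have "\<dots> \<le> sbf Per (real m' * Per) m' t"
    by (rule sbf_ge[OF Pi_pos]) (use tC Ck in auto)
  finally show "dem n T C D k (A + D k) m' \<le> sbf Per (real m' * Per) m' (A + D k)"
    unfolding t_def .
qed

end
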